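(* Let $n\ge2$, $\Delta\subset B_n$ a proper ideal, and let $\Delta^{\mathrm{aug}}$ denote the same family $\Delta$ regarded as a proper ideal of $B_{n+1}$. Then for $0\le i\le n$, $$h_i(\mathrm{Bier}(B_{n+1},\Delta^{\mathrm{aug}}))=h_{i-1}(\mathrm{Bier}(B_n,\Delta))+f_i(\Delta),$$ with the convention $h_{-1}=0$.
   Context: $B_m$ is the Boolean lattice of subsets of $[1,m]$. A proper ideal $\Delta\subset B_m$ is a nonempty family of subsets of $[1,m]$ closed under taking subsets with $[1,m]\notin\Delta$; $f_i(\Delta)$ is the number of sets of cardinality $i$ in $\Delta$. The Bier sphere $\mathrm{Bier}(B_m,\Delta)$ is the simplicial complex whose faces are the pairs $(B,C)$ with $B\subsetneq C\subseteq[1,m]$, $B\in\Delta$, $C\notin\Delta$, with $(B',C')$ a face of $(B,C)$ iff $B'\subseteq B$ and $C\subseteq C'$; the face $(B,C)$ has $|B|+m-|C|$ vertices, and all facets have $m-1$ vertices. For such a complex $\Gamma$, $f_j(\Gamma)$ is the number of faces with $j$ vertices ($f_0=1$) and $h_i(\Gamma):=\sum_{j=0}^{m-1}(-1)^{i+j}\binom{m-1-j}{m-1-i}f_j(\Gamma)$ for $0\le i\le m-1$, and $h_i:=0$ otherwise. *)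

theory Defs
  imports Main
begin

definition proper_ideal :: "nat \<Rightarrow> nat set set \<Rightarrow> bool" where
  "proper_ideal m D \<longleftrightarrow> D \<noteq> {} \<and> (\<forall>A\<in>D. A \<subseteq> {1..m})
     \<and> (\<forall>A\<in>D. \<forall>B. B \<subseteq> A \<longrightarrow> B \<in> D) \<and> {1..m} \<notin> D"

definition ideal_f :: "nat set set \<Rightarrow> nat \<Rightarrow> nat" where
  "ideal_f D i = card {A \<in> D. card A = i}"

definition bier_faces :: "nat \<Rightarrow> nat set set \<Rightarrow> (nat set \<times> nat set) set" where
  "bier_faces m D = {(B, C). B \<subset> C \<and> C \<subseteq> {1..m} \<and> B \<in> D \<and> C \<notin> D}"

definition bier_f :: "nat \<Rightarrow> nat set set \<Rightarrow> nat \<Rightarrow> nat" where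
  "bier_f m D j = card {(B, C) \<in> bier_faces m D. card B + m - card C = j}"

definition bier_h :: "nat \<Rightarrow> nat set set \<Rightarrow> int \<Rightarrow> int" where
  "bier_h m D i = (if 0 \<le> i \<and> i \<le> int m - 1 then
     (\<Sum>j = 0..m - 1. (-1) ^ (nat i + j) * int ((m - 1 - j) choose (m - 1 - nat i)) * int (bier_f m D j))
   else 0)"

end

theory Submission imports Defs begin

lemma pow_alt:
  assumes "finite X"
  shows "\<And>a k. (\<Sum>S\<in>Pow X. (-1::int) ^ card S * int ((a + card S) choose k))
     = (if card X \<le> k then (-1) ^ card X * int (a choose (k - card X)) else 0)"
  using assms
proof (induction X rule: finite_induct)
  case empty
  then show ?case by simp
next
  case (insert x X a k)
  have disj: "Pow X \<inter> insert x ` Pow X = {}" using insert.hyps(2) by auto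
  have inj: "inj_on (insert x) (Pow X)"
    using insert.hyps(2) by (rule_tac inj_onI) (metis PowD insert_ident subsetD)
  have cardS: "\<And>S. S \<in> Pow X \<Longrightarrow> card (insert x S) = Suc (card S)"
    using insert by (metis PowD card_insert_disjoint finite_subset subsetD)
  have "(\<Sum>S\<in>Pow (insert x X). (-1::int) ^ card S * int ((a + card S) choose k))
    = (\<Sum>S\<in>Pow X. (-1::int) ^ card S * int ((a + card S) choose k))
      + (\<Sum>S\<in>insert x ` Pow X. (-1::int) ^ card S * int ((a + card S) choose k))"
    unfolding Pow_insert using disj insert by (simp add: sum.union_disjoint)
  also have "(\<Sum>S\<in>insert x ` Pow X. (-1::int) ^ card S * int ((a + card S) choose k))
     = (\<Sum>S\<in>Pow X. - ((-1::int) ^ card S * int ((Suc a + card S) choose k)))"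
    by (simp add: sum.reindex[OF inj] cardS)
  finally have eq: "(\<Sum>S\<in>Pow (insert x X). (-1::int) ^ card S * int ((a + card S) choose k))
     = (\<Sum>S\<in>Pow X. (-1::int) ^ card S * int ((a + card S) choose k))
       - (\<Sum>S\<in>Pow X. (-1::int) ^ card S * int ((Suc a + card S) choose k))"
    by (simp add: sum_negf)
  show ?case
  proof (cases k)
    case 0
    then show ?thesis using eq insert by simp
  next
    case (Suc k')
    have "(\<Sum>S\<in>Pow X. (-1::int) ^ card S * int ((a + card S) choose k))
       - (\<Sum>S\<in>Pow X. (-1::int) ^ card S * int ((Suc a + card S) choose k))
       = - (\<Sum>S\<in>Pow X. (-1::int) ^ card S * int ((a + card S) choose k'))"
    proof -
      have "\<And>S. (-1::int) ^ card S * int ((a + card S) choose k) - (-1::int) ^ card S * int ((Suc a + card S) choose k)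
          = - ((-1::int) ^ card S * int ((a + card S) choose k'))"
        unfolding Suc by (simp add: algebra_simps)
      then show ?thesis unfolding sum_subtractf[symmetric] sum_negf[symmetric] by (intro sum.cong refl)
    qed
    also have "\<dots> = (if card (insert x X) \<le> k then (-1) ^ card (insert x X) * int (a choose (k - card (insert x X))) else 0)"
      using insert Suc by simp
    finally show ?thesis using eq by simp
  qed
qed

definition vt :: "nat \<Rightarrow> nat set \<times> nat set \<Rightarrow> nat" where
  "vt m F = card (fst F) + m - card (snd F)"

lemma faces_sub: "bier_faces m D \<subseteq> Pow {1..m} \<times> Pow {1..m}"
  unfolding bier_faces_def by auto

lemma faces_finite: "finite (bier_faces m D)"
  by (rule finite_subset[OF faces_sub]) auto

lemma faces_card: assumes "F \<in> bier_faces m D"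
  shows "card (fst F) < card (snd F)" "card (snd F) \<le> m"
proof -
  obtain B C where F: "F = (B, C)" "B \<subset> C" "C \<subseteq> {1..m}"
    using assms unfolding bier_faces_def by auto
  have "finite C" using F(3) finite_subset by blast
  then show "card (fst F) < card (snd F)" using F psubset_card_mono by auto
  show "card (snd F) \<le> m" using F card_mono[OF _ F(3)] by auto
qed

lemma faces_v: "F \<in> bier_faces m D \<Longrightarrow> vt m F \<le> m - 1"
  using faces_card[of F m D] unfolding vt_def by auto

lemma card_ind: "finite A \<Longrightarrow> int (card {x \<in> A. P x}) = (\<Sum>x\<in>A. if P x then 1 else 0)"
  by (simp add: sum.If_cases Int_def conj_commute)

lemma h_faces:
  assumes "i \<le> m - 1" "m \<ge> 1"
  shows "bier_h m D (int i) = (\<Sum>F\<in>bier_faces m D. (-1) ^ (i + vt m F) * int ((m - 1 - vt m F) choose (m - 1 - i)))"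
proof -
  have fj: "int (bier_f m D j) = (\<Sum>F\<in>bier_faces m D. if vt m F = j then 1 else 0)" for j
  proof -
    have "{(B, C) \<in> bier_faces m D. card B + m - card C = j} = {F \<in> bier_faces m D. vt m F = j}"
      unfolding vt_def by auto
    then show ?thesis unfolding bier_f_def using card_ind[OF faces_finite] by simp
  qed
  have "bier_h m D (int i) = (\<Sum>j = 0..m - 1. (-1) ^ (i + j) * int ((m - 1 - j) choose (m - 1 - i)) * int (bier_f m D j))"
    unfolding bier_h_def using assms by auto
  also have "\<dots> = (\<Sum>j = 0..m - 1. \<Sum>F\<in>bier_faces m D. if vt m F = j then (-1) ^ (i + j) * int ((m - 1 - j) choose (m - 1 - i)) else 0)"
    unfolding fj by (simp add: sum_distrib_left if_distrib cong: if_cong)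
  also have "\<dots> = (\<Sum>F\<in>bier_faces m D. \<Sum>j = 0..m - 1. if vt m F = j then (-1) ^ (i + j) * int ((m - 1 - j) choose (m - 1 - i)) else 0)"
    by (rule sum.swap)
  also have "\<dots> = (\<Sum>F\<in>bier_faces m D. (-1) ^ (i + vt m F) * int ((m - 1 - vt m F) choose (m - 1 - i)))"
    by (intro sum.cong refl) (use faces_v in auto)
  finally show ?thesis .
qed

lemma sign_lemma: "s \<le> n \<Longrightarrow> (-1::int) ^ (i + (n - s)) = (-1) ^ (i + n) * (-1) ^ s"
proof -
  assume "s \<le> n"
  then obtain t where t: "n = s + t" using le_Suc_ex by blast
  have "(-1::int) ^ (i + n) * (-1) ^ s = (-1) ^ (i + t) * ((-1) ^ s * (-1) ^ s)"
    unfolding t by (simp add: power_add algebra_simps)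
  then show ?thesis using t by simp
qed

theorem mainTheorem11:
  fixes n i :: nat and D :: "nat set set"
  assumes "n \<ge> 2" and "proper_ideal n D" and "i \<le> n"
  shows "bier_h (n + 1) D (int i) = bier_h n D (int i - 1) + int (ideal_f D i)"
proof -
  have Dsub: "\<And>A. A \<in> D \<Longrightarrow> A \<subseteq> {1..n}" and Dnot: "{1..n} \<notin> D"
    using assms(2) unfolding proper_ideal_def by auto
  have Dfin: "finite D" using Dsub by (meson Pow_iff finite_Pow_iff finite_atLeastAtMost finite_subset subsetI)
  define g where "g = (\<lambda>(B::nat set, S::nat set). (B, insert (Suc n) (B \<union> S)))"
  define Sig where "Sig = Sigma D (\<lambda>B. Pow ({1..n} - B))"
  define T where "T = (\<lambda>F. (-1::int) ^ (i + vt (n + 1) F) * int ((n + 1 - 1 - vt (n + 1) F) choose (n + 1 - 1 - i)))"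
  have split: "bier_faces (n + 1) D = bier_faces n D \<union> g ` Sig"
  proof (rule set_eqI)
    fix F :: "nat set \<times> nat set"
    obtain B C where F: "F = (B, C)" by fastforce
    show "F \<in> bier_faces (n + 1) D \<longleftrightarrow> F \<in> bier_faces n D \<union> g ` Sig"
    proof
      assume a: "F \<in> bier_faces (n + 1) D"
      show "F \<in> bier_faces n D \<union> g ` Sig"
      proof (cases "Suc n \<in> C")
        case False
        have "C \<subseteq> {1..Suc n}" using a F unfolding bier_faces_def by auto
        then have "C \<subseteq> {1..n}" using False by (auto simp: subset_iff le_Suc_eq)
        then have "F \<in> bier_faces n D" using a F unfolding bier_faces_def by auto
        then show ?thesis by simp
      next
        case True
        have B: "B \<in> D" "B \<subseteq> C" using a F unfolding bier_faces_def by auto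
        then have "Suc n \<notin> B" using Dsub by fastforce
        then have "C = insert (Suc n) (B \<union> (C - {Suc n} - B))" using True B by auto
        moreover have "(B, C - {Suc n} - B) \<in> Sig" unfolding Sig_def using a F B unfolding bier_faces_def by auto
        ultimately show ?thesis unfolding F g_def by (auto intro!: image_eqI[where x="(B, C - {Suc n} - B)"])
      qed
    next
      assume "F \<in> bier_faces n D \<union> g ` Sig"
      then show "F \<in> bier_faces (n + 1) D"
      proof
        assume "F \<in> bier_faces n D"
        then show ?thesis unfolding bier_faces_def by auto
      next
        assume "F \<in> g ` Sig"
        then obtain B S where BS: "B \<in> D" "S \<subseteq> {1..n} - B" "F = (B, insert (Suc n) (B \<union> S))"
          unfolding Sig_def g_def by auto
        have "Suc n \<notin> B" using Dsub BS(1) by fastforce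
        moreover have "insert (Suc n) (B \<union> S) \<notin> D" using Dsub by fastforce
        ultimately show ?thesis using BS Dsub[OF BS(1)] unfolding bier_faces_def by auto
      qed
    qed
  qed
  have disj: "bier_faces n D \<inter> g ` Sig = {}"
    unfolding bier_faces_def g_def by auto
  have inj: "inj_on g Sig"
  proof (rule inj_onI)
    fix x y assume "x \<in> Sig" "y \<in> Sig" "g x = g y"
    moreover have "snd x = snd (g x) - {Suc n} - fst x" if "x \<in> Sig" for x
      using that unfolding Sig_def g_def by (cases x) auto
    moreover have "fst x = fst (g x)" for x unfolding g_def by (cases x) auto
    ultimately show "x = y" by (metis prod.expand)
  qed
  have Sigfin: "finite Sig" unfolding Sig_def using Dfin by auto
  have hnew: "bier_h (n + 1) D (int i) = (\<Sum>F\<in>bier_faces n D. T F) + (\<Sum>F\<in>g ` Sig. T F)"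
  proof -
    have "bier_h (n + 1) D (int i) = (\<Sum>F\<in>bier_faces (n + 1) D. T F)"
      unfolding T_def by (rule h_faces) (use assms in auto)
    also have "\<dots> = (\<Sum>F\<in>bier_faces n D. T F) + (\<Sum>F\<in>g ` Sig. T F)"
      unfolding split by (rule sum.union_disjoint) (use faces_finite Sigfin disj in auto)
    finally show ?thesis .
  qed
  have part1: "(\<Sum>F\<in>bier_faces n D. T F) = bier_h n D (int i - 1)"
  proof (cases i)
    case 0
    have "T F = 0" if "F \<in> bier_faces n D" for F
    proof -
      have "vt (n + 1) F = Suc (vt n F)" using faces_card[OF that] unfolding vt_def by auto
      then show ?thesis using faces_v[OF that] assms(1) 0 unfolding T_def by simp
    qed
    then show ?thesis using 0 by (simp add: bier_h_def)
  next
    case (Suc i')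
    have "bier_h n D (int i - 1) = bier_h n D (int i')" using Suc by simp
    also have "\<dots> = (\<Sum>F\<in>bier_faces n D. (-1) ^ (i' + vt n F) * int ((n - 1 - vt n F) choose (n - 1 - i')))"
      using h_faces[of i' n] assms Suc by simp
    also have "\<dots> = (\<Sum>F\<in>bier_faces n D. T F)"
    proof (rule sum.cong[OF refl])
      fix F assume F: "F \<in> bier_faces n D"
      have "vt (n + 1) F = Suc (vt n F)" using faces_card[OF F] unfolding vt_def by auto
      then show "(-1) ^ (i' + vt n F) * int ((n - 1 - vt n F) choose (n - 1 - i')) = T F"
        unfolding T_def using Suc by simp
    qed
    finally show ?thesis by simp
  qed
  have part2: "(\<Sum>F\<in>g ` Sig. T F) = int (ideal_f D i)"
  proof -
    have "(\<Sum>F\<in>g ` Sig. T F) = (\<Sum>x\<in>Sig. T (g x))" by (rule sum.reindex[OF inj, unfolded comp_def])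
    also have "\<dots> = (\<Sum>B\<in>D. \<Sum>S\<in>Pow ({1..n} - B). T (g (B, S)))"
      unfolding Sig_def using Dfin by (simp add: sum.Sigma)
    also have "\<dots> = (\<Sum>B\<in>D. if card B = i then 1 else 0)"
    proof (rule sum.cong[OF refl])
      fix B assume B: "B \<in> D"
      have Bs: "B \<subseteq> {1..n}" "Suc n \<notin> B" using Dsub[OF B] by auto
      have fB: "finite B" using Bs(1) finite_subset by blast
      have cB: "card B \<le> n" using card_mono[OF _ Bs(1)] by simp
      have cX: "card ({1..n} - B) = n - card B" using Bs(1) by (simp add: card_Diff_subset fB)
      have tm: "T (g (B, S)) = (-1) ^ (i + n) * ((-1) ^ card S * int ((0 + card S) choose (n - i)))"
        if S: "S \<in> Pow ({1..n} - B)" for S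
      proof -
        have fS: "finite S" using S finite_subset by auto
        have sn: "card S \<le> n - card B" using S cX card_mono[of "{1..n} - B" S] by auto
        have "card (insert (Suc n) (B \<union> S)) = Suc (card B + card S)"
        proof -
          have "Suc n \<notin> B \<union> S" using S Bs by auto
          moreover have "B \<inter> S = {}" using S by auto
          ultimately show ?thesis using fB fS by (simp add: card_Un_disjoint)
        qed
        then have "vt (n + 1) (g (B, S)) = n - card S" unfolding vt_def g_def using sn by simp
        then show ?thesis unfolding T_def using sn cB sign_lemma[of "card S" n i]
          by (simp add: algebra_simps)
      qed
      have "(\<Sum>S\<in>Pow ({1..n} - B). T (g (B, S)))
          = (-1) ^ (i + n) * (\<Sum>S\<in>Pow ({1..n} - B). (-1) ^ card S * int ((0 + card S) choose (n - i)))"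
        using tm by (simp add: sum_distrib_left)
      also have "\<dots> = (-1) ^ (i + n) * (if n - card B \<le> n - i then (-1) ^ (n - card B) * int (0 choose (n - i - (n - card B))) else 0)"
        using pow_alt[of "{1..n} - B" 0 "n - i"] cX by simp
      also have "\<dots> = (if card B = i then 1 else 0)"
      proof (cases "card B = i")
        case True
        have "(-1::int) ^ (i + n) * (-1) ^ (n - i) = (-1) ^ (n - i + i + n)" by (simp add: power_add)
        also have "n - i + i + n = 2 * n" using assms(3) by simp
        finally show ?thesis using True by simp
      next
        case False
        then show ?thesis using cB assms(3) by auto
      qed
      finally show "(\<Sum>S\<in>Pow ({1..n} - B). T (g (B, S))) = (if card B = i then 1 else 0)" .
    qed
    also have "\<dots> = int (ideal_f D i)" unfolding ideal_f_def using card_ind[OF Dfin] by simp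
    finally show ?thesis .
  qed
  show ?thesis using hnew part1 part2 by simp
qed

end
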